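(* For the link two-relaxation-times scheme described in the context, under diffusive scaling, i.e. $\lambda=\mu/\Delta x$ with $\mu>0$ fixed as $\Delta x\to0$, and assuming $\epsilon_{2j}=\Delta x\,\tilde\epsilon_{2j}$ with $\tilde\epsilon_{2j}$ and $\epsilon_{2j+1}$ fixed as $\Delta x\to0$ for $j\in\{1,\dots,W\}$, the modified equation of the bulk finite difference scheme $p_2(z)m_1=0$ is, for $(t,x)\in\mathbb{R}_+\times\mathbb{R}^d$, $$\partial_t\phi(t,x)+\mu\sum_{j=1}^W\tilde\epsilon_{2j}\sum_{|\mathfrak n|=1}c_{2j}^{\mathfrak n}\partial_x^{\mathfrak n}\phi(t,x)-2\mu\Big(\frac1s-\frac12\Big)\sum_{j=1}^W\epsilon_{2j+1}\sum_{|\mathfrak n|=2}\frac{c_{2j}^{\mathfrak n}}{\mathfrak n!}\partial_x^{\mathfrak n}\phi(t,x)=O(\Delta x^2).$$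
   Context: Let $d\ge1$, $W\in\mathbb{N}^*$, $q=1+2W$. Velocities $c_1=0$, $c_{2j}=-c_{2j+1}\in\mathbb{Z}^d$, $j\in\{1,\dots,W\}$. Moment matrix $M$ with first row $(1,\dots,1)$ and, for each $j$, row $2j$ with entries $1,-1$ in columns $2j,2j+1$, row $2j+1$ with entries $1,1$ in columns $2j,2j+1$, zeros elsewhere. Relaxation parameters $s_{2j}=s\in(0,2]$ (fixed), $s_{2j+1}=2-s$; equilibrium coefficients $\epsilon\in\mathbb{R}^q$, $\epsilon_1=1$. Time step $\Delta t=\Delta x/\lambda=\Delta x^2/\mu$. Shifts $(x_\ell\phi)(x)=\phi(x-\Delta xe_\ell)$, $x^c=\prod x_\ell^{c_\ell}$; $\mathsf S(\mathsf d)=(\mathsf d(x)+\mathsf d(x^{-1}))/2$, $\mathsf A(\mathsf d)=(\mathsf d(x)-\mathsf d(x^{-1}))/2$. Time shift $(z\phi)(t)=\phi(t+\Delta t)$. Multi-index notation $c^{\mathfrak n}=\prod c_\ell^{\mathfrak n_\ell}$, $\mathfrak n!=\prod\mathfrak n_\ell!$, $\partial_x^{\mathfrak n}=\prod\partial_{x_\ell}^{\mathfrak n_\ell}$. The bulk finite difference scheme for the conserved moment is $p_2(z)m_1=0$ with $p_2(z)=z^2+(s-2)z+(1-s)-zs\sum_j\mathsf A(x^{c_{2j}})\epsilon_{2j}+z(s-2)\sum_j(\mathsf S(x^{c_{2j}})-1)\epsilon_{2j+1}$. Its modified equation is obtained by substituting a smooth $\phi$ into $p_2(z)\phi=0$,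 Taylor-expanding in $\Delta x$, normalising so that $\partial_t$ has coefficient one, and eliminating higher-order time derivatives using lower-order relations. *)

theory Defs
  imports "HOL-Analysis.Analysis" "HOL-Library.Landau_Symbols"
begin

definition pd :: "'d::finite option \<Rightarrow> (real \<Rightarrow> real^'d \<Rightarrow> real) \<Rightarrow> (real \<Rightarrow> real^'d \<Rightarrow> real)" where
  "pd dir f = (case dir of
      None \<Rightarrow> (\<lambda>t x. deriv (\<lambda>s. f s x) t)
    | Some l \<Rightarrow> (\<lambda>t x. deriv (\<lambda>h. f t (x + h *\<^sub>R axis l 1)) 0))"

definition pd_exists :: "'d::finite option \<Rightarrow> (real \<Rightarrow> real^'d \<Rightarrow> real) \<Rightarrow> bool" where
  "pd_exists dir f = (\<forall>t x. case dir of
      None \<Rightarrow> (\<lambda>s. f s x) differentiable (at t)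
    | Some l \<Rightarrow> (\<lambda>h. f t (x + h *\<^sub>R axis l 1)) differentiable (at 0))"

definition iter_pd :: "'d::finite option list \<Rightarrow> (real \<Rightarrow> real^'d \<Rightarrow> real) \<Rightarrow> (real \<Rightarrow> real^'d \<Rightarrow> real)" where
  "iter_pd ds f = foldr pd ds f"

definition smooth_tx :: "(real \<Rightarrow> real^'d::finite \<Rightarrow> real) \<Rightarrow> bool" where
  "smooth_tx f = (\<forall>ds. continuous_on UNIV (\<lambda>p. iter_pd ds f (fst p) (snd p))
                     \<and> (\<forall>dir. pd_exists dir (iter_pd ds f)))"

definition coord_list :: "'d::finite list" where
  "coord_list = (SOME xs. distinct xs \<and> set xs = UNIV)"

definition dx_multi :: "('d::finite \<Rightarrow> nat) \<Rightarrow> (real \<Rightarrow> real^'d \<Rightarrow> real) \<Rightarrow> (real \<Rightarrow> real^'d \<Rightarrow> real)" where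
  "dx_multi n f = iter_pd (concat (map (\<lambda>l. replicate (n l) (Some l)) coord_list)) f"

definition mpow :: "real^'d::finite \<Rightarrow> ('d \<Rightarrow> nat) \<Rightarrow> real" where
  "mpow c n = (\<Prod>l\<in>UNIV. (c $ l) ^ (n l))"

definition mfact :: "('d::finite \<Rightarrow> nat) \<Rightarrow> real" where
  "mfact n = (\<Prod>l\<in>UNIV. fact (n l))"

definition multi_indices :: "nat \<Rightarrow> ('d::finite \<Rightarrow> nat) set" where
  "multi_indices k = {n. (\<Sum>l\<in>UNIV. n l) = k}"

text \<open>Shift operators. (x^c phi)(x) = phi(x - dx c); S and A of the monomial x^c.\<close>
definition xsh :: "real \<Rightarrow> real^'d::finite \<Rightarrow> (real \<Rightarrow> real^'d \<Rightarrow> real) \<Rightarrow> (real \<Rightarrow> real^'d \<Rightarrow> real)" where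
  "xsh dx c f = (\<lambda>t x. f t (x - dx *\<^sub>R c))"

definition Sop :: "real \<Rightarrow> real^'d::finite \<Rightarrow> (real \<Rightarrow> real^'d \<Rightarrow> real) \<Rightarrow> (real \<Rightarrow> real^'d \<Rightarrow> real)" where
  "Sop dx c f = (\<lambda>t x. (xsh dx c f t x + xsh dx (- c) f t x) / 2)"

definition Aop :: "real \<Rightarrow> real^'d::finite \<Rightarrow> (real \<Rightarrow> real^'d \<Rightarrow> real) \<Rightarrow> (real \<Rightarrow> real^'d \<Rightarrow> real)" where
  "Aop dx c f = (\<lambda>t x. (xsh dx c f t x - xsh dx (- c) f t x) / 2)"

definition zsh :: "real \<Rightarrow> (real \<Rightarrow> real^'d::finite \<Rightarrow> real) \<Rightarrow> (real \<Rightarrow> real^'d \<Rightarrow> real)" where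
  "zsh dt f = (\<lambda>t x. f (t + dt) x)"

definition p2op :: "real \<Rightarrow> real \<Rightarrow> real \<Rightarrow> nat \<Rightarrow> (nat \<Rightarrow> real^'d::finite) \<Rightarrow> (nat \<Rightarrow> real)
     \<Rightarrow> (real \<Rightarrow> real^'d \<Rightarrow> real) \<Rightarrow> (real \<Rightarrow> real^'d \<Rightarrow> real)" where
  "p2op s dt dx W c eps f = (\<lambda>t x.
       zsh dt (zsh dt f) t x + (s - 2) * zsh dt f t x + (1 - s) * f t x
     - s * zsh dt (\<lambda>t' x'. \<Sum>j=1..W. eps (2*j) * Aop dx (c (2*j)) f t' x') t x
     + (s - 2) * zsh dt (\<lambda>t' x'. \<Sum>j=1..W. eps (2*j+1) * (Sop dx (c (2*j)) f t' x' - f t' x')) t x)"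

end

theory Submission
  imports Defs
begin

lemma iter_pd_Nil[simp]: "iter_pd [] f = f" by (simp add: iter_pd_def)
lemma iter_pd_Cons[simp]: "iter_pd (d#ds) f = pd d (iter_pd ds f)" by (simp add: iter_pd_def)
lemma iter_pd_append: "iter_pd (ds @ es) f = iter_pd ds (iter_pd es f)" by (simp add: iter_pd_def)

lemma smooth_pd: "smooth_tx f \<Longrightarrow> smooth_tx (pd d f)"
  unfolding smooth_tx_def
  by (metis iter_pd_append iter_pd_Cons iter_pd_Nil)

lemma smooth_cont: "smooth_tx f \<Longrightarrow> continuous_on UNIV (\<lambda>p. f (fst p) (snd p))"
  unfolding smooth_tx_def by (metis iter_pd_Nil)

lemma smooth_ex: "smooth_tx f \<Longrightarrow> pd_exists d f"
  unfolding smooth_tx_def by (metis iter_pd_Nil)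

lemma deriv_time: "pd_exists None g \<Longrightarrow> ((\<lambda>s. g s y) has_real_derivative pd None g t y) (at t)"
  unfolding pd_exists_def pd_def by (simp add: DERIV_deriv_iff_real_differentiable)

lemma deriv_space: "pd_exists (Some l) g \<Longrightarrow>
  ((\<lambda>p. g t (z + p *\<^sub>R axis l 1)) has_real_derivative pd (Some l) g t (z + q *\<^sub>R axis l 1)) (at q)"
proof -
  assume "pd_exists (Some l) g"
  then have "((\<lambda>h. g t ((z + q *\<^sub>R axis l 1) + h *\<^sub>R axis l 1)) has_real_derivative pd (Some l) g t (z + q *\<^sub>R axis l 1)) (at 0)"
    unfolding pd_exists_def pd_def by (simp add: DERIV_deriv_iff_real_differentiable)
  then have "((\<lambda>h. g t (z + (h + q) *\<^sub>R axis l 1)) has_real_derivative pd (Some l) g t (z + q *\<^sub>R axis l 1)) (at 0)"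
    by (simp add: algebra_simps scaleR_add_left)
  then show ?thesis using DERIV_shift[of "\<lambda>p. g t (z + p *\<^sub>R axis l 1)" _ 0 q] by simp
qed

lemma pd_lin:
  assumes fin: "finite A" and ex: "\<And>i. i \<in> A \<Longrightarrow> pd_exists d (g i)"
  shows "pd d (\<lambda>t x. \<Sum>i\<in>A. a i * g i t x) = (\<lambda>t x. \<Sum>i\<in>A. a i * pd d (g i) t x)
       \<and> pd_exists d (\<lambda>t x. \<Sum>i\<in>A. a i * g i t x)"
proof (cases d)
  case None
  have D: "((\<lambda>s. \<Sum>i\<in>A. a i * g i s x) has_real_derivative (\<Sum>i\<in>A. a i * pd None (g i) t x)) (at t)" for t x
    by (rule DERIV_sum, rule DERIV_cmult, rule deriv_time, use ex None in auto)
  show ?thesis unfolding None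
    apply (rule conjI)
    subgoal using D by (auto simp: pd_def intro!: ext DERIV_imp_deriv)
    subgoal unfolding pd_exists_def using D real_differentiable_def by auto
    done
next
  case (Some l)
  have D: "((\<lambda>p. \<Sum>i\<in>A. a i * g i t (x + p *\<^sub>R axis l 1)) has_real_derivative (\<Sum>i\<in>A. a i * pd (Some l) (g i) t (x + 0 *\<^sub>R axis l 1))) (at 0)" for t x
    by (rule DERIV_sum, rule DERIV_cmult, rule deriv_space, use ex Some in auto)
  show ?thesis unfolding Some
    apply (rule conjI)
    subgoal using D by (auto simp: pd_def intro!: ext DERIV_imp_deriv)
    subgoal unfolding pd_exists_def using D real_differentiable_def by auto
    done
qed

lemma iter_pd_lin:
  assumes fin: "finite A" and sm: "\<And>i. i \<in> A \<Longrightarrow> smooth_tx (g i)"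
  shows "iter_pd ds (\<lambda>t x. \<Sum>i\<in>A. a i * g i t x) = (\<lambda>t x. \<Sum>i\<in>A. a i * iter_pd ds (g i) t x)"
proof (induction ds)
  case Nil then show ?case by simp
next
  case (Cons d ds)
  have "pd_exists d (iter_pd ds (g i))" if "i \<in> A" for i
    using sm[OF that] unfolding smooth_tx_def by auto
  then show ?case using Cons pd_lin[OF fin, of d "\<lambda>i. iter_pd ds (g i)" a] by simp
qed

lemma smooth_lin:
  assumes fin: "finite A" and sm: "\<And>i. i \<in> A \<Longrightarrow> smooth_tx (g i)"
  shows "smooth_tx (\<lambda>t x. \<Sum>i\<in>A. a i * g i t x)"
  unfolding smooth_tx_def
proof (intro allI conjI)
  fix ds
  have c: "continuous_on UNIV (\<lambda>p. iter_pd ds (g i) (fst p) (snd p))" if "i \<in> A" for i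
    using sm[OF that] unfolding smooth_tx_def by auto
  show "continuous_on UNIV (\<lambda>p. iter_pd ds (\<lambda>t x. \<Sum>i\<in>A. a i * g i t x) (fst p) (snd p))"
    apply (subst iter_pd_lin[OF fin sm])
     apply simp
    by (intro continuous_intros c)
  fix d
  have "pd_exists d (iter_pd ds (g i))" if "i \<in> A" for i
    using sm[OF that] unfolding smooth_tx_def by auto
  then show "pd_exists d (iter_pd ds (\<lambda>t x. \<Sum>i\<in>A. a i * g i t x))"
    apply (subst iter_pd_lin[OF fin sm]) apply simp using pd_lin[OF fin, of d "\<lambda>i. iter_pd ds (g i)" a] by simp
qed

definition Pr :: "'d::finite set \<Rightarrow> real^'d \<Rightarrow> real^'d" where
  "Pr S w = (\<chi> l. if l \<in> S then w$l else 0)"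

lemma Pr_insert: "a \<notin> S \<Longrightarrow> Pr (insert a S) w = Pr S w + (w$a) *\<^sub>R axis a 1"
  by (auto simp: Pr_def vec_eq_iff axis_def)

lemma Pr_UNIV: "Pr UNIV w = w" by (simp add: Pr_def vec_eq_iff)
lemma Pr_empty: "Pr {} w = 0" by (simp add: Pr_def vec_eq_iff)

lemma mvt1:
  fixes g g' :: "real \<Rightarrow> real"
  assumes "\<And>q. (g has_real_derivative g' q) (at q)"
  shows "\<exists>\<tau>. \<bar>\<tau>\<bar> \<le> \<bar>x\<bar> \<and> g x = g 0 + g' \<tau> * x"
  using Maclaurin_bi_le[where diff="\<lambda>m. if m = 0 then g else g'" and n=1 and f=g and x=x] assms
  by auto

lemma frechet:
  fixes F :: "real^'d::finite \<Rightarrow> real" and P :: "'d \<Rightarrow> real^'d \<Rightarrow> real"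
  assumes D: "\<And>l z q. ((\<lambda>p. F (z + p *\<^sub>R axis l 1)) has_real_derivative P l (z + q *\<^sub>R axis l 1)) (at q)"
  and C: "\<And>l. continuous_on UNIV (P l)"
  shows "(F has_derivative (\<lambda>w. \<Sum>l\<in>UNIV. w$l * P l y)) (at y)"
  unfolding has_derivative_at_alt
proof (intro conjI allI impI)
  show "bounded_linear (\<lambda>w. \<Sum>l\<in>UNIV. w$l * P l y)"
    unfolding linear_conv_bounded_linear[symmetric] by (intro linearI) (auto simp: sum.distrib sum_distrib_left algebra_simps)
  fix e :: real assume "0 < e"
  define e' where "e' = e / CARD('d)"
  have "e' > 0" using \<open>0 < e\<close> by (simp add: e'_def)
  have "\<forall>\<^sub>F z in at y. \<bar>P l z - P l y\<bar> < e'" for l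
  proof -
    have "isCont (P l) y" using C[of l] by (simp add: continuous_on_eq_continuous_at)
    then have "(P l \<longlongrightarrow> P l y) (at y)" by (simp add: isCont_def)
    from tendstoD[OF this \<open>e' > 0\<close>] show ?thesis by (simp add: dist_real_def)
  qed
  then have "\<forall>\<^sub>F z in at y. \<forall>l. \<bar>P l z - P l y\<bar> < e'" by (rule eventually_all_finite)
  then obtain d where d: "d > 0" "\<And>z. z \<noteq> y \<Longrightarrow> dist z y < d \<Longrightarrow> \<forall>l. \<bar>P l z - P l y\<bar> < e'"
    unfolding eventually_at by blast
  have dd: "\<bar>P l z - P l y\<bar> < e'" if "norm (z - y) < d" for z l
    using d(2)[of z] that \<open>e' > 0\<close> by (cases "z = y") (auto simp: dist_norm)
  show "\<exists>d>0. \<forall>z. norm (z - y) < d \<longrightarrow>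
          norm (F z - F y - (\<Sum>l\<in>UNIV. (z - y)$l * P l y)) \<le> e * norm (z - y)"
  proof (intro exI[of _ d] conjI allI impI)
    show "d > 0" by fact
    fix z assume z: "norm (z - y) < d"
    define w where "w = z - y"
    have wd: "norm w < d" using z by (simp add: w_def)
    have main: "\<bar>F (y + Pr S w) - F y - (\<Sum>l\<in>S. w$l * P l y)\<bar> \<le> e' * (\<Sum>l\<in>S. \<bar>w$l\<bar>)" for S
    proof (induction S rule: infinite_finite_induct)
      case (infinite A) then show ?case by simp
    next
      case empty then show ?case by (simp add: Pr_empty)
    next
      case (insert a S)
      define u where "u = y + Pr S w"
      have "\<exists>\<tau>. \<bar>\<tau>\<bar> \<le> \<bar>w$a\<bar> \<and> (\<lambda>p. F (u + p *\<^sub>R axis a 1)) (w$a) =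
          (\<lambda>p. F (u + p *\<^sub>R axis a 1)) 0 + (\<lambda>p. P a (u + p *\<^sub>R axis a 1)) \<tau> * w$a"
        by (rule mvt1) (rule D)
      then obtain \<tau> where tau: "\<bar>\<tau>\<bar> \<le> \<bar>w$a\<bar>" "F (u + (w$a) *\<^sub>R axis a 1) = F u + P a (u + \<tau> *\<^sub>R axis a 1) * w$a"
        by auto
      have "norm (Pr S w + \<tau> *\<^sub>R axis a 1) \<le> norm w"
        by (rule norm_le_componentwise_cart) (use tau insert in \<open>auto simp: Pr_def axis_def\<close>)
      then have "\<bar>P a (u + \<tau> *\<^sub>R axis a 1) - P a y\<bar> < e'"
        using wd by (intro dd) (simp add: u_def)
      then have "\<bar>w$a\<bar> * \<bar>P a (u + \<tau> *\<^sub>R axis a 1) - P a y\<bar> \<le> \<bar>w$a\<bar> * e'"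
        by (intro mult_left_mono) auto
      moreover have "F (u + (w$a) *\<^sub>R axis a 1) - F u - w$a * P a y = w$a * (P a (u + \<tau> *\<^sub>R axis a 1) - P a y)"
        by (simp add: tau(2) algebra_simps)
      ultimately have 1: "\<bar>F (u + (w$a) *\<^sub>R axis a 1) - F u - w$a * P a y\<bar> \<le> e' * \<bar>w$a\<bar>"
        by (simp add: abs_mult mult.commute)
      have "y + Pr (insert a S) w = u + (w$a) *\<^sub>R axis a 1"
        using insert by (simp add: Pr_insert u_def algebra_simps)
      then show ?case using insert 1 unfolding u_def
        by (simp add: algebra_simps)
    qed
    have "(\<Sum>l\<in>UNIV. \<bar>w$l\<bar>) \<le> (\<Sum>l\<in>(UNIV::'d set). norm w)"
      by (intro sum_mono) (metis component_le_norm_cart real_norm_def)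
    then have "(\<Sum>l\<in>UNIV. \<bar>w$l\<bar>) \<le> CARD('d) * norm w" by simp
    then have "e' * (\<Sum>l\<in>UNIV. \<bar>w$l\<bar>) \<le> e' * (CARD('d) * norm w)"
      using \<open>e' > 0\<close> by (intro mult_left_mono) auto
    also have "\<dots> = e * norm w" by (simp add: e'_def)
    finally show "norm (F z - F y - (\<Sum>l\<in>UNIV. (z - y)$l * P l y)) \<le> e * norm (z - y)"
      using main[of UNIV] by (simp add: Pr_UNIV w_def)
  qed
qed

lemma chain_dir:
  fixes F :: "real^'d::finite \<Rightarrow> real" and P :: "'d \<Rightarrow> real^'d \<Rightarrow> real"
  assumes D: "\<And>l z q. ((\<lambda>p. F (z + p *\<^sub>R axis l 1)) has_real_derivative P l (z + q *\<^sub>R axis l 1)) (at q)"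
  and C: "\<And>l. continuous_on UNIV (P l)"
  shows "((\<lambda>h. F (y + h *\<^sub>R c)) has_real_derivative (\<Sum>l\<in>UNIV. c$l * P l (y + h *\<^sub>R c))) (at h)"
proof -
  have i: "((\<lambda>h. y + h *\<^sub>R c) has_derivative (\<lambda>k. k *\<^sub>R c)) (at h)"
    by (auto intro!: derivative_eq_intros)
  have "((\<lambda>h. F (y + h *\<^sub>R c)) has_derivative (\<lambda>k. \<Sum>l\<in>UNIV. (k *\<^sub>R c)$l * P l (y + h *\<^sub>R c))) (at h)"
    using has_derivative_compose[OF i frechet[OF D C]] by simp
  then show ?thesis
    by (rule has_derivative_imp_has_field_derivative) (simp add: sum_distrib_left algebra_simps)
qed

lemma smooth_chain:
  assumes "smooth_tx f"
  shows "((\<lambda>h. f t (y + h *\<^sub>R c)) has_real_derivative (\<Sum>l\<in>UNIV. c$l * pd (Some l) f t (y + h *\<^sub>R c))) (at h)"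
proof (rule chain_dir[where P="\<lambda>l. pd (Some l) f t"])
  show "((\<lambda>p. f t (z + p *\<^sub>R axis l 1)) has_real_derivative pd (Some l) f t (z + q *\<^sub>R axis l 1)) (at q)" for l z q
    by (rule deriv_space, rule smooth_ex, fact)
  show "continuous_on UNIV (pd (Some l) f t)" for l
  proof -
    have "continuous_on UNIV (\<lambda>p. pd (Some l) f (fst p) (snd p))"
      by (rule smooth_cont, rule smooth_pd, fact)
    then have "continuous_on UNIV ((\<lambda>p. pd (Some l) f (fst p) (snd p)) \<circ> (\<lambda>y. (t, y)))"
      by (intro continuous_on_compose continuous_intros) (auto elim: continuous_on_subset)
    then show ?thesis by (simp add: o_def)
  qed
qed

fun DD :: "real^'d::finite \<Rightarrow> nat \<Rightarrow> (real \<Rightarrow> real^'d \<Rightarrow> real) \<Rightarrow> (real \<Rightarrow> real^'d \<Rightarrow> real)" where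
  "DD c 0 f = f"
| "DD c (Suc k) f = (\<lambda>t x. \<Sum>l\<in>UNIV. c$l * DD c k (pd (Some l) f) t x)"

lemma DD_smooth: "smooth_tx f \<Longrightarrow> smooth_tx (DD c k f)"
proof (induction k arbitrary: f)
  case 0 then show ?case by simp
next
  case (Suc k)
  then show ?case by (simp only: DD.simps) (intro smooth_lin, auto intro: smooth_pd)
qed

lemma DD_deriv: "smooth_tx f \<Longrightarrow>
  ((\<lambda>h. DD c k f t (y + h *\<^sub>R c)) has_real_derivative DD c (Suc k) f t (y + h *\<^sub>R c)) (at h)"
proof (induction k arbitrary: f)
  case 0 then show ?case using smooth_chain[OF 0] by simp
next
  case (Suc k)
  have "((\<lambda>h. \<Sum>l\<in>UNIV. c$l * DD c k (pd (Some l) f) t (y + h *\<^sub>R c)) has_real_derivative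
     (\<Sum>l\<in>UNIV. c$l * DD c (Suc k) (pd (Some l) f) t (y + h *\<^sub>R c))) (at h)"
    by (intro DERIV_sum DERIV_cmult Suc.IH smooth_pd Suc.prems)
  then show ?case by simp
qed

lemma taylor_space:
  assumes "smooth_tx f"
  shows "\<exists>\<tau>. \<bar>\<tau>\<bar> \<le> \<bar>h\<bar> \<and> f t (y + h *\<^sub>R c) =
     (\<Sum>m<n. DD c m f t y / fact m * h^m) + DD c n f t (y + \<tau> *\<^sub>R c) / fact n * h^n"
proof -
  have P1: "(\<lambda>m q. DD c m f t (y + q *\<^sub>R c)) 0 = (\<lambda>q. f t (y + q *\<^sub>R c))" by simp
  have P2: "\<forall>m q. m < n \<and> \<bar>q\<bar> \<le> \<bar>h\<bar> \<longrightarrow> DERIV ((\<lambda>m q. DD c m f t (y + q *\<^sub>R c)) m) q :> (\<lambda>m q. DD c m f t (y + q *\<^sub>R c)) (Suc m) q"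
    using DD_deriv[OF assms] by simp
  show ?thesis using Maclaurin_bi_le[OF P1 P2] by simp
qed

lemma iter_pd_None_Suc: "iter_pd (replicate (Suc m) None) g = pd None (iter_pd (replicate m None) g)"
  by simp

lemma taylor_time:
  assumes "smooth_tx g"
  shows "\<exists>\<tau>. \<bar>\<tau>\<bar> \<le> \<bar>a\<bar> \<and> g (t + a) y =
     (\<Sum>m<n. iter_pd (replicate m None) g t y / fact m * a^m) + iter_pd (replicate n None) g (t + \<tau>) y / fact n * a^n"
proof -
  have d: "((\<lambda>q. iter_pd (replicate m None) g (t + q) y) has_real_derivative iter_pd (replicate (Suc m) None) g (t + q) y) (at q)" for m q
  proof -
    have "pd_exists None (iter_pd (replicate m None) g)" using assms unfolding smooth_tx_def by auto
    from deriv_time[OF this, of y "q + t"]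
    have "((\<lambda>q. iter_pd (replicate m None) g (q + t) y) has_real_derivative iter_pd (replicate (Suc m) None) g (q + t) y) (at q)"
      using DERIV_shift[of "\<lambda>s. iter_pd (replicate m None) g s y" _ q t] by simp
    then show ?thesis by (simp add: add.commute)
  qed
  have P1: "(\<lambda>m q. iter_pd (replicate m None) g (t + q) y) 0 = (\<lambda>q. g (t + q) y)" by simp
  have P2: "\<forall>m q. m < n \<and> \<bar>q\<bar> \<le> \<bar>a\<bar> \<longrightarrow> DERIV ((\<lambda>m q. iter_pd (replicate m None) g (t + q) y) m) q :> (\<lambda>m q. iter_pd (replicate m None) g (t + q) y) (Suc m) q"
    using d by simp
  show ?thesis using Maclaurin_bi_le[OF P1 P2] by simp
qed

lemma cont_bound:
  fixes g :: "real \<Rightarrow> real^'d::finite \<Rightarrow> real"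
  assumes "continuous_on UNIV (\<lambda>p. g (fst p) (snd p))"
  shows "\<exists>B. \<forall>t' y. \<bar>t' - t0\<bar> \<le> R1 \<longrightarrow> norm (y - x0) \<le> R2 \<longrightarrow> \<bar>g t' y\<bar> \<le> B"
proof -
  have "compact ((\<lambda>p. g (fst p) (snd p)) ` cball (t0, x0) (R1 + R2))"
    by (rule compact_continuous_image[OF continuous_on_subset[OF assms] compact_cball]) simp
  then have "bounded ((\<lambda>p. g (fst p) (snd p)) ` cball (t0, x0) (R1 + R2))"
    by (rule compact_imp_bounded)
  then obtain B where B: "\<forall>v \<in> (\<lambda>p. g (fst p) (snd p)) ` cball (t0, x0) (R1 + R2). norm v \<le> B"
    unfolding bounded_iff by blast
  show ?thesis
  proof (intro exI allI impI)
    fix t' y assume h: "\<bar>t' - t0\<bar> \<le> R1" "norm (y - x0) \<le> R2"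
    have eq: "(t0, x0) - (t', y) = (t0 - t', x0 - y)" by simp
    have "dist (t0, x0) (t', y) = norm (t0 - t', x0 - y)"
      unfolding dist_norm eq by (rule refl)
    also have "\<dots> \<le> norm (t0 - t') + norm (x0 - y)" by (rule norm_Pair_le)
    also have "\<dots> \<le> R1 + R2" using h by (simp add: norm_minus_commute abs_minus_commute)
    finally have "(t', y) \<in> cball (t0, x0) (R1 + R2)" by simp
    then have "g t' y \<in> (\<lambda>p. g (fst p) (snd p)) ` cball (t0, x0) (R1 + R2)"
      by (rule rev_image_eqI) simp
    from bspec[OF B this] have "norm (g t' y) \<le> B" .
    then show "\<bar>g t' y\<bar> \<le> B" by simp
  qed
qed

lemma smooth_cont_x: "smooth_tx g \<Longrightarrow> continuous_on UNIV (g t)"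
proof -
  assume "smooth_tx g"
  then have "continuous_on UNIV (\<lambda>p. g (fst p) (snd p))" by (rule smooth_cont)
  then have "continuous_on UNIV ((\<lambda>p. g (fst p) (snd p)) \<circ> (\<lambda>y. (t, y)))"
    by (intro continuous_on_compose continuous_intros) (auto elim: continuous_on_subset)
  then show ?thesis by (simp add: o_def)
qed

lemma schwarz_mvt:
  assumes sm: "smooth_tx f"
  shows "\<exists>\<xi> \<eta>. \<bar>\<xi>\<bar> \<le> \<bar>h\<bar> \<and> \<bar>\<eta>\<bar> \<le> \<bar>h\<bar> \<and>
    f t (x + h *\<^sub>R axis a 1 + h *\<^sub>R axis b 1) - f t (x + h *\<^sub>R axis a 1) - f t (x + h *\<^sub>R axis b 1) + f t x
    = h * h * pd (Some b) (pd (Some a) f) t (x + \<xi> *\<^sub>R axis a 1 + \<eta> *\<^sub>R axis b 1)"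
proof -
  let ?ea = "axis a 1 :: real^'a" and ?eb = "axis b 1 :: real^'a"
  have exa: "pd_exists (Some a) f" by (rule smooth_ex[OF sm])
  have exb: "pd_exists (Some b) (pd (Some a) f)" by (rule smooth_ex[OF smooth_pd[OF sm]])
  have dv: "((\<lambda>p. f t ((x + h *\<^sub>R ?eb) + p *\<^sub>R ?ea) - f t (x + p *\<^sub>R ?ea)) has_real_derivative
      pd (Some a) f t ((x + h *\<^sub>R ?eb) + q *\<^sub>R ?ea) - pd (Some a) f t (x + q *\<^sub>R ?ea)) (at q)" for q
    by (intro DERIV_diff deriv_space exa)
  from mvt1[OF dv, of h] obtain \<xi> where xi: "\<bar>\<xi>\<bar> \<le> \<bar>h\<bar>"
    "f t ((x + h *\<^sub>R ?eb) + h *\<^sub>R ?ea) - f t (x + h *\<^sub>R ?ea) =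
     f t ((x + h *\<^sub>R ?eb)) - f t x + (pd (Some a) f t ((x + h *\<^sub>R ?eb) + \<xi> *\<^sub>R ?ea) - pd (Some a) f t (x + \<xi> *\<^sub>R ?ea)) * h"
    by auto
  have dw: "((\<lambda>p. pd (Some a) f t ((x + \<xi> *\<^sub>R ?ea) + p *\<^sub>R ?eb)) has_real_derivative
      pd (Some b) (pd (Some a) f) t ((x + \<xi> *\<^sub>R ?ea) + q *\<^sub>R ?eb)) (at q)" for q
    by (intro deriv_space exb)
  from mvt1[OF dw, of h] obtain \<eta> where eta: "\<bar>\<eta>\<bar> \<le> \<bar>h\<bar>"
    "pd (Some a) f t ((x + \<xi> *\<^sub>R ?ea) + h *\<^sub>R ?eb) = pd (Some a) f t (x + \<xi> *\<^sub>R ?ea) +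
       pd (Some b) (pd (Some a) f) t ((x + \<xi> *\<^sub>R ?ea) + \<eta> *\<^sub>R ?eb) * h"
    by auto
  have e1: "x + h *\<^sub>R ?eb + h *\<^sub>R ?ea = x + h *\<^sub>R ?ea + h *\<^sub>R ?eb" by (simp add: algebra_simps)
  have e2: "x + h *\<^sub>R ?eb + \<xi> *\<^sub>R ?ea = x + \<xi> *\<^sub>R ?ea + h *\<^sub>R ?eb" by (simp add: algebra_simps)
  show ?thesis
    apply (rule exI[of _ \<xi>], rule exI[of _ \<eta>])
    using xi eta unfolding e1 e2 by (simp add: algebra_simps)
qed

lemma abs_contra: "(u::real) = w \<Longrightarrow> \<bar>u - v\<bar> < \<bar>v - z\<bar> / 2 \<Longrightarrow> \<bar>w - z\<bar> < \<bar>v - z\<bar> / 2 \<Longrightarrow> False"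
  by (simp add: abs_if split: if_splits)

lemma schwarz:
  assumes sm: "smooth_tx f"
  shows "pd (Some b) (pd (Some a) f) t x = pd (Some a) (pd (Some b) f) t x"
proof (rule ccontr)
  let ?G1 = "pd (Some b) (pd (Some a) f) t" and ?G2 = "pd (Some a) (pd (Some b) f) t"
  assume ne: "?G1 x \<noteq> ?G2 x"
  define e where "e = \<bar>?G1 x - ?G2 x\<bar> / 2"
  have e: "e > 0" using ne by (simp add: e_def)
  have c1: "continuous (at x) ?G1"
    using smooth_cont_x[OF smooth_pd[OF smooth_pd[OF sm]]] by (simp add: continuous_on_eq_continuous_at)
  have c2: "continuous (at x) ?G2"
    using smooth_cont_x[OF smooth_pd[OF smooth_pd[OF sm]]] by (simp add: continuous_on_eq_continuous_at)
  obtain d1 where d1: "d1 > 0" "\<And>z. dist z x < d1 \<Longrightarrow> dist (?G1 z) (?G1 x) < e"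
    using c1 e unfolding continuous_at_eps_delta by blast
  obtain d2 where d2: "d2 > 0" "\<And>z. dist z x < d2 \<Longrightarrow> dist (?G2 z) (?G2 x) < e"
    using c2 e unfolding continuous_at_eps_delta by blast
  define h where "h = min d1 d2 / 3"
  have h: "h > 0" "2 * h < d1" "2 * h < d2" using d1 d2 by (auto simp: h_def)
  obtain \<xi> \<eta> where A: "\<bar>\<xi>\<bar> \<le> \<bar>h\<bar>" "\<bar>\<eta>\<bar> \<le> \<bar>h\<bar>"
    "f t (x + h *\<^sub>R axis a 1 + h *\<^sub>R axis b 1) - f t (x + h *\<^sub>R axis a 1) - f t (x + h *\<^sub>R axis b 1) + f t x
    = h * h * ?G1 (x + \<xi> *\<^sub>R axis a 1 + \<eta> *\<^sub>R axis b 1)"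
    using schwarz_mvt[OF sm, of h t x a b] by blast
  obtain \<xi>' \<eta>' where B: "\<bar>\<xi>'\<bar> \<le> \<bar>h\<bar>" "\<bar>\<eta>'\<bar> \<le> \<bar>h\<bar>"
    "f t (x + h *\<^sub>R axis b 1 + h *\<^sub>R axis a 1) - f t (x + h *\<^sub>R axis b 1) - f t (x + h *\<^sub>R axis a 1) + f t x
    = h * h * ?G2 (x + \<xi>' *\<^sub>R axis b 1 + \<eta>' *\<^sub>R axis a 1)"
    using schwarz_mvt[OF sm, of h t x b a] by blast
  have veq: "x + h *\<^sub>R axis b 1 + h *\<^sub>R axis a 1 = x + h *\<^sub>R axis a 1 + h *\<^sub>R axis b 1" by (simp add: algebra_simps)
  have "h * h * ?G1 (x + \<xi> *\<^sub>R axis a 1 + \<eta> *\<^sub>R axis b 1) = h * h * ?G2 (x + \<xi>' *\<^sub>R axis b 1 + \<eta>' *\<^sub>R axis a 1)"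
    using A(3) B(3)[unfolded veq] by linarith
  then have eq: "?G1 (x + \<xi> *\<^sub>R axis a 1 + \<eta> *\<^sub>R axis b 1) = ?G2 (x + \<xi>' *\<^sub>R axis b 1 + \<eta>' *\<^sub>R axis a 1)"
    using h(1) by simp
  have n: "norm (u *\<^sub>R axis i 1 + v *\<^sub>R axis j (1::real)) \<le> 2 * h" if "\<bar>u\<bar> \<le> \<bar>h\<bar>" "\<bar>v\<bar> \<le> \<bar>h\<bar>" for u v and i j :: 'a
  proof -
    have "norm (u *\<^sub>R axis i 1 + v *\<^sub>R axis j (1::real)) \<le> norm (u *\<^sub>R axis i (1::real)) + norm (v *\<^sub>R axis j (1::real))"
      by (rule norm_triangle_ineq)
    also have "\<dots> = \<bar>u\<bar> + \<bar>v\<bar>" by simp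
    finally show ?thesis using that h(1) by simp
  qed
  have "dist (?G1 (x + \<xi> *\<^sub>R axis a 1 + \<eta> *\<^sub>R axis b 1)) (?G1 x) < e"
    apply (rule d1(2)) using n[OF A(1,2), of a b] h by (simp add: dist_norm add.assoc)
  moreover have "dist (?G2 (x + \<xi>' *\<^sub>R axis b 1 + \<eta>' *\<^sub>R axis a 1)) (?G2 x) < e"
    apply (rule d2(2)) using n[OF B(1,2), of b a] h by (simp add: dist_norm add.assoc)
  ultimately show False using eq unfolding e_def dist_real_def by (metis abs_contra)
qed

definition dl :: "'d \<Rightarrow> 'd \<Rightarrow> nat" where "dl a = (\<lambda>k. if k = a then 1 else 0)"

lemma coord_list_prop: "distinct (coord_list::'d::finite list) \<and> set (coord_list::'d list) = UNIV"
proof -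
  have "finite (UNIV::'d set)" by simp
  from finite_distinct_list[OF this] obtain xs :: "'d list" where "set xs = UNIV \<and> distinct xs" by blast
  then have "\<exists>xs::'d list. distinct xs \<and> set xs = UNIV" by blast
  then show ?thesis unfolding coord_list_def by (rule someI_ex)
qed

lemma in_coord_list[simp]: "l \<in> set coord_list"
  using coord_list_prop by blast

lemma distinct_coord_list[simp]: "distinct coord_list"
  using coord_list_prop by blast

lemma sum_dl: "(\<Sum>k\<in>(UNIV::'d::finite set). dl a k) = 1"
  by (simp add: dl_def)

lemma mi_pick:
  fixes n :: "'d::finite \<Rightarrow> nat"
  assumes "(\<Sum>l\<in>UNIV. n l) = Suc k"
  shows "\<exists>a. n a > 0 \<and> (\<Sum>l\<in>UNIV. n l - dl a l) = k"
proof -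
  obtain a where a: "n a > 0"
  proof (rule ccontr)
    assume "\<not> thesis"
    then have "\<forall>a. n a = 0" using that by auto
    then show False using assms by simp
  qed
  have le: "\<And>l. l\<in>UNIV \<Longrightarrow> dl a l \<le> n l" using a by (simp add: dl_def)
  have "(\<Sum>l\<in>UNIV. n l - dl a l) = (\<Sum>l\<in>UNIV. n l) - (\<Sum>l\<in>UNIV. dl a l)"
    by (rule sum_subtractf_nat[OF le])
  then show ?thesis using a assms sum_dl[of a] by auto
qed

lemma mi_zero:
  fixes n :: "'d::finite \<Rightarrow> nat"
  assumes "(\<Sum>l\<in>UNIV. n l) = 0" shows "n = (\<lambda>l. 0)"
  using assms by (auto simp: fun_eq_iff)

lemma mi1: "multi_indices 1 = range (dl :: 'd::finite \<Rightarrow> _)"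
proof
  show "multi_indices 1 \<subseteq> range (dl :: 'd::finite \<Rightarrow> _)"
  proof
    fix n :: "'d \<Rightarrow> nat" assume "n \<in> multi_indices 1"
    then have "(\<Sum>l\<in>UNIV. n l) = Suc 0" by (simp add: multi_indices_def)
    from mi_pick[OF this] obtain a where a: "n a > 0" "(\<Sum>l\<in>UNIV. n l - dl a l) = 0" by blast
    from mi_zero[OF a(2)] have "\<forall>l. n l - dl a l = 0" by (simp add: fun_eq_iff)
    then have "n = dl a" using a(1) by (auto simp: fun_eq_iff dl_def split: if_splits)
    then show "n \<in> range dl" by simp
  qed
  show "range (dl :: 'd::finite \<Rightarrow> _) \<subseteq> multi_indices 1"
    by (auto simp: multi_indices_def sum_dl)
qed

definition dl2 :: "'d \<Rightarrow> 'd \<Rightarrow> 'd \<Rightarrow> nat" where "dl2 a b = (\<lambda>k. dl a k + dl b k)"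

lemma mi2: "multi_indices 2 = (\<lambda>(a,b). dl2 a b) ` (UNIV :: ('d::finite \<times> 'd) set)"
proof
  show "multi_indices 2 \<subseteq> (\<lambda>(a,b). dl2 a b) ` (UNIV :: ('d::finite \<times> 'd) set)"
  proof
    fix n :: "'d \<Rightarrow> nat" assume "n \<in> multi_indices 2"
    then have "(\<Sum>l\<in>UNIV. n l) = Suc 1" by (simp add: multi_indices_def)
    from mi_pick[OF this] obtain a where a: "n a > 0" "(\<Sum>l\<in>UNIV. n l - dl a l) = 1" by blast
    then have "(\<lambda>l. n l - dl a l) \<in> multi_indices 1" by (simp add: multi_indices_def)
    then obtain b where b: "(\<lambda>l. n l - dl a l) = dl b" using mi1 by blast
    have "n = dl2 a b"
    proof
      fix l
      have "n l - dl a l = dl b l" using b by (simp add: fun_eq_iff)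
      moreover have "dl a l \<le> n l" using a(1) by (simp add: dl_def)
      ultimately show "n l = dl2 a b l" by (simp add: dl2_def)
    qed
    then show "n \<in> (\<lambda>(a,b). dl2 a b) ` UNIV" by auto
  qed
  show "(\<lambda>(a,b). dl2 a b) ` (UNIV :: ('d::finite \<times> 'd) set) \<subseteq> multi_indices 2"
    by (auto simp: multi_indices_def dl2_def sum.distrib sum_dl)
qed

lemma mpow_dl: "mpow c (dl a) = c$a"
  unfolding mpow_def dl_def by (simp add: if_distrib cong: if_cong)

lemma mpow_dl2: "mpow c (dl2 a b) = c$a * c$b"
  unfolding mpow_def dl2_def by (simp add: power_add prod.distrib mpow_def[symmetric] mpow_dl)

lemma mfact_dl2: "mfact (dl2 a b) = (if a = b then 2 else 1)"
proof (cases "a = b")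
  case True
  have "\<forall>l. fact (dl2 a b l) = (if l = a then (2::real) else 1)" using True by (simp add: dl2_def dl_def)
  then have "mfact (dl2 a b) = (\<Prod>k\<in>UNIV. if k = a then (2::real) else 1)"
    unfolding mfact_def by simp
  then show ?thesis using True by simp
next
  case False
  have "\<forall>l. fact (dl2 a b l) = (1::real)" using False by (simp add: dl2_def dl_def)
  then have "mfact (dl2 a b) = (\<Prod>k\<in>UNIV. (1::real))"
    unfolding mfact_def by simp
  then show ?thesis using False by simp
qed

lemma concat_single:
  assumes "distinct xs" "\<forall>k. k \<noteq> l \<longrightarrow> n k = 0"
  shows "concat (map (\<lambda>k. replicate (n k) (Some k)) xs) = (if l \<in> set xs then replicate (n l) (Some l) else [])"
  using assms by (induction xs) auto

lemma concat_le1: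
  assumes "\<forall>k. n k \<le> 1"
  shows "concat (map (\<lambda>k. replicate (n k) (Some k)) xs) = map Some (filter (\<lambda>k. n k = 1) xs)"
  using assms
proof (induction xs)
  case Nil then show ?case by simp
next
  case (Cons a xs)
  have "n a = 0 \<or> n a = 1" using Cons.prems by (metis le_neq_implies_less less_one)
  then show ?case using Cons by auto
qed

lemma two_list: "distinct L \<Longrightarrow> set L = {a, b} \<Longrightarrow> a \<noteq> b \<Longrightarrow> L = [a, b] \<or> L = [b, a]"
proof -
  assume d: "distinct L" and s: "set L = {a, b}" and ab: "a \<noteq> b"
  then have "length L = 2" using distinct_card[OF d] by simp
  then obtain u v where L: "L = [u, v]"
    by (metis (no_types) One_nat_def Suc_length_conv length_0_conv numeral_2_eq_2)
  from s have "{u, v} = {a, b}" by (simp add: L)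
  then have "(u = a \<and> v = b) \<or> (u = b \<and> v = a)" by (simp add: doubleton_eq_iff)
  then show ?thesis by (auto simp: L)
qed

lemma dx_multi_dl: "dx_multi (dl l) f = pd (Some l) f"
proof -
  have z: "\<forall>k. k \<noteq> l \<longrightarrow> dl l k = 0" by (simp add: dl_def)
  have "concat (map (\<lambda>k. replicate (dl l k) (Some k)) coord_list) = replicate (dl l l) (Some l)"
    using concat_single[OF conjunct1[OF coord_list_prop] z] by simp
  also have "\<dots> = [Some l]" by (simp add: dl_def)
  finally show ?thesis unfolding dx_multi_def by simp
qed

lemma dx_multi_dl2:
  assumes "smooth_tx f"
  shows "dx_multi (dl2 a b) f = pd (Some b) (pd (Some a) f)"
proof (cases "a = b")
  case True
  have z: "\<forall>k. k \<noteq> a \<longrightarrow> dl2 a b k = 0" using True by (simp add: dl2_def dl_def)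
  have "concat (map (\<lambda>k. replicate (dl2 a b k) (Some k)) coord_list) = replicate (dl2 a b a) (Some a)"
    using concat_single[OF distinct_coord_list z] by simp
  also have "\<dots> = [Some a, Some a]" using True by (simp add: dl2_def dl_def numeral_2_eq_2)
  finally have "concat (map (\<lambda>k. replicate (dl2 a b k) (Some k)) coord_list) = [Some a, Some a]" .
  then show ?thesis unfolding dx_multi_def using True by simp
next
  case False
  have le: "\<forall>k. dl2 a b k \<le> 1" using False by (simp add: dl2_def dl_def)
  have d: "distinct (filter (\<lambda>k. dl2 a b k = 1) coord_list)" by simp
  have s: "set (filter (\<lambda>k. dl2 a b k = 1) coord_list) = {a, b}"
    using False by (auto simp: dl2_def dl_def)
  have sw: "pd (Some a) (pd (Some b) f) = pd (Some b) (pd (Some a) f)"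
    using schwarz[OF assms] by (intro ext) simp
  have cc: "concat (map (\<lambda>k. replicate (dl2 a b k) (Some k)) coord_list) = map Some (filter (\<lambda>k. dl2 a b k = 1) coord_list)"
    by (rule concat_le1[OF le])
  from two_list[OF d s False] show ?thesis
  proof
    assume "filter (\<lambda>k. dl2 a b k = 1) coord_list = [a, b]"
    then show ?thesis unfolding dx_multi_def cc using sw by simp
  next
    assume "filter (\<lambda>k. dl2 a b k = 1) coord_list = [b, a]"
    then show ?thesis unfolding dx_multi_def cc by simp
  qed
qed

lemma M1: "(\<Sum>n\<in>multi_indices 1. mpow c n * dx_multi n f t x) = DD c 1 f t x"
proof -
  have inj: "inj (dl :: 'd \<Rightarrow> _)" by (auto simp: inj_def dl_def fun_eq_iff)
  have "(\<Sum>n\<in>multi_indices 1. mpow c n * dx_multi n f t x) = (\<Sum>l\<in>UNIV. mpow c (dl l) * dx_multi (dl l) f t x)"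
    unfolding mi1 by (rule sum.reindex[OF inj, unfolded o_def])
  also have "\<dots> = (\<Sum>l\<in>UNIV. c$l * pd (Some l) f t x)"
    by (simp only: mpow_dl dx_multi_dl)
  also have "\<dots> = DD c 1 f t x" by simp
  finally show ?thesis .
qed

lemma dl2_fiber: "dl2 l m = dl2 a b \<longleftrightarrow> (l = a \<and> m = b) \<or> (l = b \<and> m = a)"
proof
  assume H: "dl2 l m = dl2 a b"
  have A: "\<forall>k. dl l k + dl m k = dl a k + dl b k" using H by (simp add: dl2_def fun_eq_iff)
  have e1: "dl l l + dl m l = dl a l + dl b l" using A by blast
  have e2: "dl l l = 1" by (simp add: dl_def)
  have pos: "0 < dl a l + dl b l" using e1 e2 by linarith
  have la: "l = a \<or> l = b"
  proof (rule ccontr)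
    assume "\<not> (l = a \<or> l = b)"
    then have "dl a l = 0" "dl b l = 0" by (auto simp: dl_def)
    then show False using pos by simp
  qed
  show "(l = a \<and> m = b) \<or> (l = b \<and> m = a)"
  proof (cases "l = a")
    case True
    then have "dl m m = dl b m" using A by (metis add_left_cancel)
    then have "m = b" by (simp add: dl_def split: if_splits)
    then show ?thesis using True by simp
  next
    case False
    then have lb: "l = b" using la by simp
    then have "dl m m = dl a m" using A by (metis add.commute add_left_cancel)
    then have "m = a" by (simp add: dl_def split: if_splits)
    then show ?thesis using lb by simp
  qed
next
  assume "(l = a \<and> m = b) \<or> (l = b \<and> m = a)"
  then show "dl2 l m = dl2 a b" by (auto simp: dl2_def fun_eq_iff)
qed

lemma M2:
  assumes sm: "smooth_tx f"
  shows "(\<Sum>n\<in>multi_indices 2. mpow c n / mfact n * dx_multi n f t x) = DD c 2 f t x / 2"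
proof -
  define T where "T l m = pd (Some m) (pd (Some l) f) t x" for l m
  define h where "h p = c$(fst p) * c$(snd p) * T (fst p) (snd p)" for p
  define g where "g n = mpow c n / mfact n * dx_multi n f t x" for n
  have Tsym: "T l m = T m l" for l m unfolding T_def by (rule schwarz[OF sm])
  have fib: "(\<Sum>p\<in>{p. p \<in> UNIV \<and> (\<lambda>(a,b). dl2 a b) p = n}. h p) = 2 * g n" if "n \<in> multi_indices 2" for n
  proof -
    from that obtain a b where n: "n = dl2 a b" unfolding mi2 by auto
    have F: "{p. p \<in> UNIV \<and> (\<lambda>(a,b). dl2 a b) p = dl2 a b} = {(a,b),(b,a)}"
      by (auto simp: dl2_fiber)
    show ?thesis
    proof (cases "a = b")
      case True
      then show ?thesis unfolding n F g_def h_def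
        by (simp add: mpow_dl2 mfact_dl2 dx_multi_dl2[OF sm] T_def)
    next
      case False
      then show ?thesis unfolding n F g_def h_def
        using Tsym[of a b] by (simp add: mpow_dl2 mfact_dl2 dx_multi_dl2[OF sm] T_def)
    qed
  qed
  have img: "(\<lambda>(a,b). dl2 a b) ` UNIV \<subseteq> multi_indices 2" unfolding mi2 by simp
  have "(\<Sum>n\<in>multi_indices 2. 2 * g n) = (\<Sum>n\<in>multi_indices 2. (\<Sum>p\<in>{p. p \<in> UNIV \<and> (\<lambda>(a,b). dl2 a b) p = n}. h p))"
    using fib by simp
  also have "\<dots> = (\<Sum>p\<in>UNIV. h p)"
    by (rule sum.group[OF _ _ img]) (simp_all add: mi2)
  also have "\<dots> = (\<Sum>l\<in>UNIV. \<Sum>m\<in>UNIV. h (l, m))"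
    unfolding UNIV_Times_UNIV[symmetric] sum.cartesian_product by simp
  also have "\<dots> = DD c 2 f t x"
    by (simp add: numeral_2_eq_2 h_def T_def sum_distrib_left mult.assoc)
  finally have "2 * (\<Sum>n\<in>multi_indices 2. g n) = DD c 2 f t x" by (simp add: sum_distrib_left)
  then show ?thesis unfolding g_def by simp
qed

lemma alg_T:
  fixes h \<mu> s f0 f1 f2 f1' R1 R2 :: real
  assumes "h \<noteq> 0" "\<mu> \<noteq> 0" "s \<noteq> 0"
    and "f2 = f0 + f1 * (2 * (h^2/\<mu>)) + R1 / 2 * (2 * (h^2/\<mu>))^2"
    and "f1' = f0 + f1 * (h^2/\<mu>) + R2 / 2 * (h^2/\<mu>)^2"
  shows "\<mu> / (s * h^2) * (f2 + (s - 2) * f1' + (1 - s) * f0) - f1 = h^2 / (s * \<mu>) * (2 * R1 + (s - 2) / 2 * R2)"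
  unfolding assms(4,5) using assms(1-3) by (simp add: field_simps power2_eq_square power4_eq_xxxx)

lemma smooth_iter_cont: "smooth_tx f \<Longrightarrow> continuous_on UNIV (\<lambda>p. iter_pd ds f (fst p) (snd p))"
  unfolding smooth_tx_def by blast

lemma piece_T:
  assumes sm: "smooth_tx \<phi>" and mu: "\<mu> > 0" and s: "s > 0"
  shows "\<exists>K. \<forall>h. 0 < h \<longrightarrow> h^2 \<le> \<mu> \<longrightarrow>
    \<bar>\<mu> / (s * h^2) * (\<phi> (t + h^2/\<mu> + h^2/\<mu>) x + (s - 2) * \<phi> (t + h^2/\<mu>) x + (1 - s) * \<phi> t x) - pd None \<phi> t x\<bar> \<le> K * h^2"
proof -
  obtain B where B: "\<forall>t' y. \<bar>t' - t\<bar> \<le> 2 \<longrightarrow> norm (y - x) \<le> 0 \<longrightarrow> \<bar>iter_pd (replicate 2 None) \<phi> t' y\<bar> \<le> B"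
    using cont_bound[OF smooth_iter_cont[OF sm], of t 2 x 0] by blast
  show ?thesis
  proof (intro exI[of _ "(2 * B + \<bar>s - 2\<bar> / 2 * B) / (s * \<mu>)"] allI impI)
    fix h :: real assume h: "0 < h" "h^2 \<le> \<mu>"
    define dt where "dt = h^2/\<mu>"
    have dt: "0 < dt" "dt \<le> 1" using h mu by (auto simp: dt_def)
    obtain \<tau>1 where t1: "\<bar>\<tau>1\<bar> \<le> \<bar>2 * dt\<bar>" "\<phi> (t + 2 * dt) x =
       (\<Sum>m<2. iter_pd (replicate m None) \<phi> t x / fact m * (2*dt)^m) + iter_pd (replicate 2 None) \<phi> (t + \<tau>1) x / fact 2 * (2*dt)^2"
      using taylor_time[OF sm, of "2*dt" t x 2] by blast
    obtain \<tau>2 where t2: "\<bar>\<tau>2\<bar> \<le> \<bar>dt\<bar>" "\<phi> (t + dt) x =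
       (\<Sum>m<2. iter_pd (replicate m None) \<phi> t x / fact m * dt^m) + iter_pd (replicate 2 None) \<phi> (t + \<tau>2) x / fact 2 * dt^2"
      using taylor_time[OF sm, of "dt" t x 2] by blast
    define R1 where "R1 = iter_pd (replicate 2 None) \<phi> (t + \<tau>1) x"
    define R2 where "R2 = iter_pd (replicate 2 None) \<phi> (t + \<tau>2) x"
    have "\<bar>(t + \<tau>1) - t\<bar> \<le> 2" using t1(1) dt by auto
    then have bR1: "\<bar>R1\<bar> \<le> B" unfolding R1_def using B by simp
    have "\<bar>(t + \<tau>2) - t\<bar> \<le> 2" using t2(1) dt by auto
    then have bR2: "\<bar>R2\<bar> \<le> B" unfolding R2_def using B by simp
    have s2: "(\<Sum>m<2. iter_pd (replicate m None) \<phi> t x / fact m * a^m) = \<phi> t x + pd None \<phi> t x * a" for a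
      by (simp add: eval_nat_numeral)
    have f2: "fact 2 = (2::real)" by (simp add: eval_nat_numeral)
    have tt: "t + h^2/\<mu> + h^2/\<mu> = t + 2 * dt" by (simp add: dt_def)
    have e1: "\<phi> (t + h^2/\<mu> + h^2/\<mu>) x = \<phi> t x + pd None \<phi> t x * (2 * (h^2/\<mu>)) + R1 / 2 * (2 * (h^2/\<mu>))^2"
      using t1(2) unfolding tt s2 f2 R1_def dt_def .
    have e2: "\<phi> (t + h^2/\<mu>) x = \<phi> t x + pd None \<phi> t x * (h^2/\<mu>) + R2 / 2 * (h^2/\<mu>)^2"
      using t2(2) unfolding s2 f2 R2_def dt_def .
    have eq: "\<mu> / (s * h^2) * (\<phi> (t + h^2/\<mu> + h^2/\<mu>) x + (s - 2) * \<phi> (t + h^2/\<mu>) x + (1 - s) * \<phi> t x) - pd None \<phi> t x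
      = h^2 / (s * \<mu>) * (2 * R1 + (s - 2) / 2 * R2)"
      by (rule alg_T[OF _ _ _ e1 e2]) (use h mu s in auto)
    have "\<bar>2 * R1 + (s - 2) / 2 * R2\<bar> \<le> 2 * B + \<bar>s - 2\<bar> / 2 * B"
    proof -
      have "\<bar>(s - 2) / 2 * R2\<bar> = \<bar>s - 2\<bar> / 2 * \<bar>R2\<bar>" by (simp add: abs_mult)
      also have "\<dots> \<le> \<bar>s - 2\<bar> / 2 * B" using bR2 by (intro mult_left_mono) auto
      finally show ?thesis using bR1 by linarith
    qed
    then have "h^2 / (s * \<mu>) * \<bar>2 * R1 + (s - 2) / 2 * R2\<bar> \<le> h^2 / (s * \<mu>) * (2 * B + \<bar>s - 2\<bar> / 2 * B)"
      using s mu by (intro mult_left_mono) auto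
    then show "\<bar>\<mu> / (s * h^2) * (\<phi> (t + h^2/\<mu> + h^2/\<mu>) x + (s - 2) * \<phi> (t + h^2/\<mu>) x + (1 - s) * \<phi> t x) - pd None \<phi> t x\<bar>
      \<le> (2 * B + \<bar>s - 2\<bar> / 2 * B) / (s * \<mu>) * h^2"
      unfolding eq using s mu by (simp add: abs_mult mult.commute)
  qed
qed

lemma alg_A:
  fixes h \<mu> s et D0 D1 D1t D2 G R3a R3b P Q :: real
  assumes "h \<noteq> 0" "\<mu> \<noteq> 0" "s \<noteq> 0"
    and "Q = D0 + D1 * h + D2 / 2 * h^2 + R3a / 6 * h^3"
    and "P = D0 + D1 * (-h) + D2 / 2 * (-h)^2 + R3b / 6 * (-h)^3"
    and "D1 = D1t + G * (h^2/\<mu>)"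
  shows "\<mu> / (s * h^2) * (- s * (h * et * ((P - Q) / 2))) - \<mu> * (et * D1t)
     = h^2 * (et * G + \<mu> * et * (R3a + R3b) / 12)"
  unfolding assms(4,5,6) using assms(1-3) by (simp add: field_simps power2_eq_square power3_eq_cube)

lemma alg_S:
  fixes h \<mu> s ep D0 D1 D2 D2t D3 G R4a R4b P Q :: real
  assumes "h \<noteq> 0" "\<mu> \<noteq> 0" "s \<noteq> 0"
    and "Q = D0 + D1 * h + D2 / 2 * h^2 + D3 / 6 * h^3 + R4a / 24 * h^4"
    and "P = D0 + D1 * (-h) + D2 / 2 * (-h)^2 + D3 / 6 * (-h)^3 + R4b / 24 * (-h)^4"
    and "D2 = D2t + G * (h^2/\<mu>)"
  shows "\<mu> / (s * h^2) * (s - 2) * (ep * ((P + Q) / 2 - D0)) + 2 * \<mu> * (1/s - 1/2) * (ep * (D2t / 2))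
     = h^2 * ((s - 2) / s * ep * (G / 2 + \<mu> * (R4a + R4b) / 48))"
  unfolding assms(4,5,6) using assms(1-3) by (simp add: field_simps power2_eq_square power3_eq_cube power4_eq_xxxx)

lemma sum1: "(\<Sum>m<1. (f m::real) / fact m * a^m) = f 0" by simp
lemma sum3: "(\<Sum>m<3. (f m::real) / fact m * a^m) = f 0 + f 1 * a + f 2 / 2 * a^2"
  by (simp add: eval_nat_numeral)
lemma sum4: "(\<Sum>m<4. (f m::real) / fact m * a^m) = f 0 + f 1 * a + f 2 / 2 * a^2 + f 3 / 6 * a^3"
  by (simp add: eval_nat_numeral)

declare DD.simps(2)[simp del]

lemma piece_A:
  fixes C :: "real^'d::finite"
  assumes sm: "smooth_tx \<phi>" and mu: "\<mu> > 0" and s: "s > 0"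
  shows "\<exists>K. \<forall>h. 0 < h \<longrightarrow> h \<le> 1 \<longrightarrow> h^2 \<le> \<mu> \<longrightarrow>
    \<bar>\<mu> / (s * h^2) * (- s * (h * et * ((\<phi> (t + h^2/\<mu>) (x - h *\<^sub>R C) - \<phi> (t + h^2/\<mu>) (x - h *\<^sub>R - C)) / 2)))
      - \<mu> * (et * DD C 1 \<phi> t x)\<bar> \<le> K * h^2"
proof -
  obtain B3 where B3: "\<forall>t' y. \<bar>t' - t\<bar> \<le> 2 \<longrightarrow> norm (y - x) \<le> norm C \<longrightarrow> \<bar>DD C 3 \<phi> t' y\<bar> \<le> B3"
    using cont_bound[OF smooth_cont[OF DD_smooth[OF sm]], of t 2 x "norm C"] by blast
  obtain B1 where B1: "\<forall>t' y. \<bar>t' - t\<bar> \<le> 2 \<longrightarrow> norm (y - x) \<le> 0 \<longrightarrow> \<bar>iter_pd (replicate 1 None) (DD C 1 \<phi>) t' y\<bar> \<le> B1"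
    using cont_bound[OF smooth_iter_cont[OF DD_smooth[OF sm]], of t 2 x 0] by blast
  show ?thesis
  proof (intro exI[of _ "\<bar>et\<bar> * B1 + \<mu> * \<bar>et\<bar> * (B3 + B3) / 12"] allI impI)
    fix h :: real assume h: "0 < h" "h \<le> 1" "h^2 \<le> \<mu>"
    define dt where "dt = h^2/\<mu>"
    have dt: "0 < dt" "dt \<le> 1" using h mu by (auto simp: dt_def)
    define t' where "t' = t + dt"
    obtain \<tau>a where ta: "\<bar>\<tau>a\<bar> \<le> \<bar>h\<bar>" "\<phi> t' (x + h *\<^sub>R C) =
       (\<Sum>m<3. DD C m \<phi> t' x / fact m * h^m) + DD C 3 \<phi> t' (x + \<tau>a *\<^sub>R C) / fact 3 * h^3"
      using taylor_space[OF sm, of h t' x C 3] by blast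
    obtain \<tau>b where tb: "\<bar>\<tau>b\<bar> \<le> \<bar>-h\<bar>" "\<phi> t' (x + (-h) *\<^sub>R C) =
       (\<Sum>m<3. DD C m \<phi> t' x / fact m * (-h)^m) + DD C 3 \<phi> t' (x + \<tau>b *\<^sub>R C) / fact 3 * (-h)^3"
      using taylor_space[OF sm, of "-h" t' x C 3] by blast
    obtain \<sigma> where ts: "\<bar>\<sigma>\<bar> \<le> \<bar>dt\<bar>" "DD C 1 \<phi> (t + dt) x =
       (\<Sum>m<1. iter_pd (replicate m None) (DD C 1 \<phi>) t x / fact m * dt^m) + iter_pd (replicate 1 None) (DD C 1 \<phi>) (t + \<sigma>) x / fact 1 * dt^1"
      using taylor_time[OF DD_smooth[OF sm, of C 1], of dt t x 1] by blast
    define R3a where "R3a = DD C 3 \<phi> t' (x + \<tau>a *\<^sub>R C)"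
    define R3b where "R3b = DD C 3 \<phi> t' (x + \<tau>b *\<^sub>R C)"
    define G where "G = iter_pd (replicate 1 None) (DD C 1 \<phi>) (t + \<sigma>) x"
    have f3: "fact 3 = (6::real)" by (simp add: eval_nat_numeral)
    have tt: "\<bar>t' - t\<bar> \<le> 2" using dt by (simp add: t'_def)
    have na: "norm ((x + \<tau>a *\<^sub>R C) - x) \<le> norm C" using ta(1) h by (simp add: mult_left_le_one_le)
    have nb: "norm ((x + \<tau>b *\<^sub>R C) - x) \<le> norm C" using tb(1) h by (simp add: mult_left_le_one_le)
    have bA: "\<bar>R3a\<bar> \<le> B3" unfolding R3a_def using B3 tt na by blast
    have bB: "\<bar>R3b\<bar> \<le> B3" unfolding R3b_def using B3 tt nb by blast
    have "\<bar>(t + \<sigma>) - t\<bar> \<le> 2" using ts(1) dt by simp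
    then have bG: "\<bar>G\<bar> \<le> B1" unfolding G_def using B1 by simp
    have eQ: "\<phi> t' (x - h *\<^sub>R - C) = \<phi> t' x + DD C 1 \<phi> t' x * h + DD C 2 \<phi> t' x / 2 * h^2 + R3a / 6 * h^3"
      using ta(2) unfolding sum3[of "\<lambda>m. DD C m \<phi> t' x"] f3 R3a_def by simp
    have eP: "\<phi> t' (x - h *\<^sub>R C) = \<phi> t' x + DD C 1 \<phi> t' x * (-h) + DD C 2 \<phi> t' x / 2 * (-h)^2 + R3b / 6 * (-h)^3"
    proof -
      have "x - h *\<^sub>R C = x + (-h) *\<^sub>R C" by simp
      then show ?thesis using tb(2) unfolding sum3[of "\<lambda>m. DD C m \<phi> t' x"] f3 R3b_def by simp
    qed
    have eD: "DD C 1 \<phi> t' x = DD C 1 \<phi> t x + G * (h^2/\<mu>)"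
      using ts(2) unfolding sum1 G_def t'_def dt_def by simp
    have eq: "\<mu> / (s * h^2) * (- s * (h * et * ((\<phi> (t + h^2/\<mu>) (x - h *\<^sub>R C) - \<phi> (t + h^2/\<mu>) (x - h *\<^sub>R - C)) / 2)))
      - \<mu> * (et * DD C 1 \<phi> t x) = h^2 * (et * G + \<mu> * et * (R3a + R3b) / 12)"
      unfolding t'_def[symmetric] dt_def[symmetric]
      by (rule alg_A[OF _ _ _ eQ eP eD[unfolded dt_def]]) (use h mu s in auto)
    have "\<bar>et * G + \<mu> * et * (R3a + R3b) / 12\<bar> \<le> \<bar>et\<bar> * B1 + \<mu> * \<bar>et\<bar> * (B3 + B3) / 12"
    proof -
      have 1: "\<bar>et * G\<bar> \<le> \<bar>et\<bar> * B1" using bG by (simp add: abs_mult mult_left_mono)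
      have "\<bar>R3a + R3b\<bar> \<le> B3 + B3" using bA bB by linarith
      then have m: "\<bar>et\<bar> * \<bar>R3a + R3b\<bar> \<le> \<bar>et\<bar> * (B3 + B3)" by (rule mult_left_mono) simp
      have "\<mu> * (\<bar>et\<bar> * \<bar>R3a + R3b\<bar>) \<le> \<mu> * (\<bar>et\<bar> * (B3 + B3))" using mult_left_mono[OF m, of \<mu>] mu by simp
      then have 2: "\<bar>\<mu> * et * (R3a + R3b) / 12\<bar> \<le> \<mu> * \<bar>et\<bar> * (B3 + B3) / 12"
        using mu by (simp add: abs_mult mult.assoc) (simp add: mult_ac)
      show ?thesis using 1 2 by linarith
    qed
    then have "h^2 * \<bar>et * G + \<mu> * et * (R3a + R3b) / 12\<bar> \<le> h^2 * (\<bar>et\<bar> * B1 + \<mu> * \<bar>et\<bar> * (B3 + B3) / 12)"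
      by (intro mult_left_mono) auto
    then show "\<bar>\<mu> / (s * h^2) * (- s * (h * et * ((\<phi> (t + h^2/\<mu>) (x - h *\<^sub>R C) - \<phi> (t + h^2/\<mu>) (x - h *\<^sub>R - C)) / 2)))
      - \<mu> * (et * DD C 1 \<phi> t x)\<bar> \<le> (\<bar>et\<bar> * B1 + \<mu> * \<bar>et\<bar> * (B3 + B3) / 12) * h^2"
      unfolding eq by (simp add: abs_mult mult.commute)
  qed
qed

lemma piece_S:
  fixes C :: "real^'d::finite"
  assumes sm: "smooth_tx \<phi>" and mu: "\<mu> > 0" and s: "s > 0"
  shows "\<exists>K. \<forall>h. 0 < h \<longrightarrow> h \<le> 1 \<longrightarrow> h^2 \<le> \<mu> \<longrightarrow>
    \<bar>\<mu> / (s * h^2) * (s - 2) * (ep * ((\<phi> (t + h^2/\<mu>) (x - h *\<^sub>R C) + \<phi> (t + h^2/\<mu>) (x - h *\<^sub>R - C)) / 2 - \<phi> (t + h^2/\<mu>) x))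
      + 2 * \<mu> * (1/s - 1/2) * (ep * (DD C 2 \<phi> t x / 2))\<bar> \<le> K * h^2"
proof -
  obtain B4 where B4: "\<forall>t' y. \<bar>t' - t\<bar> \<le> 2 \<longrightarrow> norm (y - x) \<le> norm C \<longrightarrow> \<bar>DD C 4 \<phi> t' y\<bar> \<le> B4"
    using cont_bound[OF smooth_cont[OF DD_smooth[OF sm]], of t 2 x "norm C"] by blast
  obtain B2 where B2: "\<forall>t' y. \<bar>t' - t\<bar> \<le> 2 \<longrightarrow> norm (y - x) \<le> 0 \<longrightarrow> \<bar>iter_pd (replicate 1 None) (DD C 2 \<phi>) t' y\<bar> \<le> B2"
    using cont_bound[OF smooth_iter_cont[OF DD_smooth[OF sm]], of t 2 x 0] by blast
  show ?thesis
  proof (intro exI[of _ "\<bar>s - 2\<bar> / s * \<bar>ep\<bar> * (B2 / 2 + \<mu> * (B4 + B4) / 48)"] allI impI)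
    fix h :: real assume h: "0 < h" "h \<le> 1" "h^2 \<le> \<mu>"
    define dt where "dt = h^2/\<mu>"
    have dt: "0 < dt" "dt \<le> 1" using h mu by (auto simp: dt_def)
    define t' where "t' = t + dt"
    obtain \<tau>a where ta: "\<bar>\<tau>a\<bar> \<le> \<bar>h\<bar>" "\<phi> t' (x + h *\<^sub>R C) =
       (\<Sum>m<4. DD C m \<phi> t' x / fact m * h^m) + DD C 4 \<phi> t' (x + \<tau>a *\<^sub>R C) / fact 4 * h^4"
      using taylor_space[OF sm, of h t' x C 4] by blast
    obtain \<tau>b where tb: "\<bar>\<tau>b\<bar> \<le> \<bar>-h\<bar>" "\<phi> t' (x + (-h) *\<^sub>R C) =
       (\<Sum>m<4. DD C m \<phi> t' x / fact m * (-h)^m) + DD C 4 \<phi> t' (x + \<tau>b *\<^sub>R C) / fact 4 * (-h)^4"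
      using taylor_space[OF sm, of "-h" t' x C 4] by blast
    obtain \<sigma> where ts: "\<bar>\<sigma>\<bar> \<le> \<bar>dt\<bar>" "DD C 2 \<phi> (t + dt) x =
       (\<Sum>m<1. iter_pd (replicate m None) (DD C 2 \<phi>) t x / fact m * dt^m) + iter_pd (replicate 1 None) (DD C 2 \<phi>) (t + \<sigma>) x / fact 1 * dt^1"
      using taylor_time[OF DD_smooth[OF sm, of C 2], of dt t x 1] by blast
    define R4a where "R4a = DD C 4 \<phi> t' (x + \<tau>a *\<^sub>R C)"
    define R4b where "R4b = DD C 4 \<phi> t' (x + \<tau>b *\<^sub>R C)"
    define G where "G = iter_pd (replicate 1 None) (DD C 2 \<phi>) (t + \<sigma>) x"
    have f4: "fact 4 = (24::real)" by (simp add: eval_nat_numeral)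
    have tt: "\<bar>t' - t\<bar> \<le> 2" using dt by (simp add: t'_def)
    have na: "norm ((x + \<tau>a *\<^sub>R C) - x) \<le> norm C" using ta(1) h by (simp add: mult_left_le_one_le)
    have nb: "norm ((x + \<tau>b *\<^sub>R C) - x) \<le> norm C" using tb(1) h by (simp add: mult_left_le_one_le)
    have bA: "\<bar>R4a\<bar> \<le> B4" unfolding R4a_def using B4 tt na by blast
    have bB: "\<bar>R4b\<bar> \<le> B4" unfolding R4b_def using B4 tt nb by blast
    have "\<bar>(t + \<sigma>) - t\<bar> \<le> 2" using ts(1) dt by simp
    then have bG: "\<bar>G\<bar> \<le> B2" unfolding G_def using B2 by simp
    have eQ: "\<phi> t' (x - h *\<^sub>R - C) = \<phi> t' x + DD C 1 \<phi> t' x * h + DD C 2 \<phi> t' x / 2 * h^2 + DD C 3 \<phi> t' x / 6 * h^3 + R4a / 24 * h^4"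
      using ta(2) unfolding sum4[of "\<lambda>m. DD C m \<phi> t' x"] f4 R4a_def by simp
    have eP: "\<phi> t' (x - h *\<^sub>R C) = \<phi> t' x + DD C 1 \<phi> t' x * (-h) + DD C 2 \<phi> t' x / 2 * (-h)^2 + DD C 3 \<phi> t' x / 6 * (-h)^3 + R4b / 24 * (-h)^4"
    proof -
      have "x - h *\<^sub>R C = x + (-h) *\<^sub>R C" by simp
      then show ?thesis using tb(2) unfolding sum4[of "\<lambda>m. DD C m \<phi> t' x"] f4 R4b_def by simp
    qed
    have eD: "DD C 2 \<phi> t' x = DD C 2 \<phi> t x + G * (h^2/\<mu>)"
      using ts(2) unfolding sum1 G_def t'_def dt_def by simp
    have eq: "\<mu> / (s * h^2) * (s - 2) * (ep * ((\<phi> (t + h^2/\<mu>) (x - h *\<^sub>R C) + \<phi> (t + h^2/\<mu>) (x - h *\<^sub>R - C)) / 2 - \<phi> (t + h^2/\<mu>) x))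
      + 2 * \<mu> * (1/s - 1/2) * (ep * (DD C 2 \<phi> t x / 2)) = h^2 * ((s - 2) / s * ep * (G / 2 + \<mu> * (R4a + R4b) / 48))"
      unfolding t'_def[symmetric] dt_def[symmetric]
      by (rule alg_S[OF _ _ _ eQ eP eD[unfolded dt_def]]) (use h mu s in auto)
    have X: "\<bar>G / 2 + \<mu> * (R4a + R4b) / 48\<bar> \<le> B2 / 2 + \<mu> * (B4 + B4) / 48"
    proof -
      have 1: "\<bar>G / 2\<bar> \<le> B2 / 2" using bG by simp
      have "\<bar>R4a + R4b\<bar> \<le> B4 + B4" using bA bB by linarith
      then have "\<mu> * \<bar>R4a + R4b\<bar> \<le> \<mu> * (B4 + B4)" using mult_left_mono[of _ _ \<mu>] mu by simp
      then have 2: "\<bar>\<mu> * (R4a + R4b) / 48\<bar> \<le> \<mu> * (B4 + B4) / 48"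
        using mu by (simp add: abs_mult)
      show ?thesis using 1 2 by linarith
    qed
    have "\<bar>(s - 2) / s * ep * (G / 2 + \<mu> * (R4a + R4b) / 48)\<bar> = \<bar>s - 2\<bar> / s * \<bar>ep\<bar> * \<bar>G / 2 + \<mu> * (R4a + R4b) / 48\<bar>"
      using s by (simp add: abs_mult)
    also have "\<dots> \<le> \<bar>s - 2\<bar> / s * \<bar>ep\<bar> * (B2 / 2 + \<mu> * (B4 + B4) / 48)"
      using X s by (intro mult_left_mono) auto
    finally have Y: "\<bar>(s - 2) / s * ep * (G / 2 + \<mu> * (R4a + R4b) / 48)\<bar> \<le> \<bar>s - 2\<bar> / s * \<bar>ep\<bar> * (B2 / 2 + \<mu> * (B4 + B4) / 48)" .
    have "h^2 * \<bar>(s - 2) / s * ep * (G / 2 + \<mu> * (R4a + R4b) / 48)\<bar> \<le> h^2 * (\<bar>s - 2\<bar> / s * \<bar>ep\<bar> * (B2 / 2 + \<mu> * (B4 + B4) / 48))"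
      using Y by (intro mult_left_mono) auto
    then show "\<bar>\<mu> / (s * h^2) * (s - 2) * (ep * ((\<phi> (t + h^2/\<mu>) (x - h *\<^sub>R C) + \<phi> (t + h^2/\<mu>) (x - h *\<^sub>R - C)) / 2 - \<phi> (t + h^2/\<mu>) x))
      + 2 * \<mu> * (1/s - 1/2) * (ep * (DD C 2 \<phi> t x / 2))\<bar> \<le> \<bar>s - 2\<bar> / s * \<bar>ep\<bar> * (B2 / 2 + \<mu> * (B4 + B4) / 48) * h^2"
      unfolding eq by (simp add: abs_mult mult.commute)
  qed
qed

lemma decomp:
  fixes k X Y s \<mu> m :: real and a b u v :: "nat \<Rightarrow> real"
  shows "k * (X - s * (\<Sum>j\<in>J. a j) + (s - 2) * (\<Sum>j\<in>J. b j)) - (Y + \<mu> * (\<Sum>j\<in>J. u j) - m * (\<Sum>j\<in>J. v j))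
    = (k * X - Y) + (\<Sum>j\<in>J. k * (- s * a j) - \<mu> * u j) + (\<Sum>j\<in>J. k * (s - 2) * b j + m * v j)"
proof -
  have A1: "(\<Sum>j\<in>J. k * (- s * a j) - \<mu> * u j) = (k * - s) * (\<Sum>j\<in>J. a j) - \<mu> * (\<Sum>j\<in>J. u j)"
    by (simp add: sum_subtractf sum_distrib_left mult.assoc)
  have A2: "(\<Sum>j\<in>J. k * (s - 2) * b j + m * v j) = (k * (s - 2)) * (\<Sum>j\<in>J. b j) + m * (\<Sum>j\<in>J. v j)"
    by (simp add: sum.distrib sum_distrib_left)
  show ?thesis unfolding A1 A2 by (simp add: algebra_simps)
qed

theorem proposition12:
  fixes W :: nat and s \<mu> :: real
    and c :: "nat \<Rightarrow> real^'d::finite"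
    and etil eps :: "nat \<Rightarrow> real"
    and \<phi> :: "real \<Rightarrow> real^'d \<Rightarrow> real"
    and t :: real and x :: "real^'d"
  assumes "W \<ge> 1" and "0 < s" and "s \<le> 2" and "0 < \<mu>"
    and "c 1 = 0"
    and "\<forall>j\<in>{1..W}. c (2*j+1) = - c (2*j)"
    and "\<forall>j\<in>{1..W}. \<forall>l. c (2*j) $ l \<in> \<int>"
    and "eps 1 = 1"
    and "smooth_tx \<phi>"
    and "0 \<le> t"
  shows "(\<lambda>dx. \<mu> / (s * dx^2) *
             p2op s (dx^2 / \<mu>) dx W c (\<lambda>k. if even k then dx * etil k else eps k) \<phi> t x
           - (pd None \<phi> t x
              + \<mu> * (\<Sum>j=1..W. etil (2*j) *
                  (\<Sum>n\<in>multi_indices 1. mpow (c (2*j)) n * dx_multi n \<phi> t x))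
              - 2 * \<mu> * (1/s - 1/2) * (\<Sum>j=1..W. eps (2*j+1) *
                  (\<Sum>n\<in>multi_indices 2. mpow (c (2*j)) n / mfact n * dx_multi n \<phi> t x))))
         \<in> O[at_right 0](\<lambda>dx. dx^2)"
proof -
  note sm = \<open>smooth_tx \<phi>\<close> and mu = \<open>0 < \<mu>\<close> and s = \<open>0 < s\<close>
  define k where "k h = \<mu> / (s * h^2)" for h :: real
  define TA where "TA h j = \<mu> / (s * h^2) * (- s * (h * etil (2*j) * ((\<phi> (t + h^2/\<mu>) (x - h *\<^sub>R c (2*j)) - \<phi> (t + h^2/\<mu>) (x - h *\<^sub>R - c (2*j))) / 2)))
      - \<mu> * (etil (2*j) * DD (c (2*j)) 1 \<phi> t x)" for h j
  define TS where "TS h j = \<mu> / (s * h^2) * (s - 2) * (eps (2*j+1) * ((\<phi> (t + h^2/\<mu>) (x - h *\<^sub>R c (2*j)) + \<phi> (t + h^2/\<mu>) (x - h *\<^sub>R - c (2*j))) / 2 - \<phi> (t + h^2/\<mu>) x))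
      + 2 * \<mu> * (1/s - 1/2) * (eps (2*j+1) * (DD (c (2*j)) 2 \<phi> t x / 2))" for h j
  define TT where "TT h = \<mu> / (s * h^2) * (\<phi> (t + h^2/\<mu> + h^2/\<mu>) x + (s - 2) * \<phi> (t + h^2/\<mu>) x + (1 - s) * \<phi> t x) - pd None \<phi> t x" for h
  have split: "\<mu> / (s * h^2) *
             p2op s (h^2 / \<mu>) h W c (\<lambda>k. if even k then h * etil k else eps k) \<phi> t x
           - (pd None \<phi> t x
              + \<mu> * (\<Sum>j=1..W. etil (2*j) *
                  (\<Sum>n\<in>multi_indices 1. mpow (c (2*j)) n * dx_multi n \<phi> t x))
              - 2 * \<mu> * (1/s - 1/2) * (\<Sum>j=1..W. eps (2*j+1) *
                  (\<Sum>n\<in>multi_indices 2. mpow (c (2*j)) n / mfact n * dx_multi n \<phi> t x)))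
      = TT h + (\<Sum>j=1..W. TA h j) + (\<Sum>j=1..W. TS h j)" for h
  proof -
    have p: "p2op s (h^2 / \<mu>) h W c (\<lambda>k. if even k then h * etil k else eps k) \<phi> t x =
      (\<phi> (t + h^2/\<mu> + h^2/\<mu>) x + (s - 2) * \<phi> (t + h^2/\<mu>) x + (1 - s) * \<phi> t x)
      - s * (\<Sum>j=1..W. h * etil (2*j) * ((\<phi> (t + h^2/\<mu>) (x - h *\<^sub>R c (2*j)) - \<phi> (t + h^2/\<mu>) (x - h *\<^sub>R - c (2*j))) / 2))
      + (s - 2) * (\<Sum>j=1..W. eps (2*j+1) * ((\<phi> (t + h^2/\<mu>) (x - h *\<^sub>R c (2*j)) + \<phi> (t + h^2/\<mu>) (x - h *\<^sub>R - c (2*j))) / 2 - \<phi> (t + h^2/\<mu>) x))"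
      unfolding p2op_def zsh_def Aop_def Sop_def xsh_def by simp
    have m1: "(\<Sum>n\<in>multi_indices 1. mpow (c (2*j)) n * dx_multi n \<phi> t x) = DD (c (2*j)) 1 \<phi> t x" for j
      by (rule M1)
    have m2: "(\<Sum>n\<in>multi_indices 2. mpow (c (2*j)) n / mfact n * dx_multi n \<phi> t x) = DD (c (2*j)) 2 \<phi> t x / 2" for j
      by (rule M2[OF sm])
    show ?thesis unfolding p m1 m2 decomp TT_def TA_def TS_def by (simp add: mult.assoc)
  qed
  obtain KT where KT: "\<forall>h. 0 < h \<longrightarrow> h^2 \<le> \<mu> \<longrightarrow> \<bar>TT h\<bar> \<le> KT * h^2"
    using piece_T[OF sm mu s, of t x] unfolding TT_def by blast
  have "\<forall>j. \<exists>K. \<forall>h. 0 < h \<longrightarrow> h \<le> 1 \<longrightarrow> h^2 \<le> \<mu> \<longrightarrow> \<bar>TA h j\<bar> \<le> K * h^2"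
    unfolding TA_def using piece_A[OF sm mu s] by blast
  then obtain KA where KA: "\<forall>j h. 0 < h \<longrightarrow> h \<le> 1 \<longrightarrow> h^2 \<le> \<mu> \<longrightarrow> \<bar>TA h j\<bar> \<le> KA j * h^2"
    by metis
  have "\<forall>j. \<exists>K. \<forall>h. 0 < h \<longrightarrow> h \<le> 1 \<longrightarrow> h^2 \<le> \<mu> \<longrightarrow> \<bar>TS h j\<bar> \<le> K * h^2"
    unfolding TS_def using piece_S[OF sm mu s] by blast
  then obtain KS where KS: "\<forall>j h. 0 < h \<longrightarrow> h \<le> 1 \<longrightarrow> h^2 \<le> \<mu> \<longrightarrow> \<bar>TS h j\<bar> \<le> KS j * h^2"
    by metis
  have ev: "eventually (\<lambda>h. norm (TT h + (\<Sum>j=1..W. TA h j) + (\<Sum>j=1..W. TS h j))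
       \<le> (KT + (\<Sum>j=1..W. KA j) + (\<Sum>j=1..W. KS j)) * norm (h^2)) (at_right (0::real))"
  proof (rule eventually_at_rightI)
    show "(0::real) < min 1 (sqrt \<mu>)" using mu by simp
    fix h :: real assume "h \<in> {0<..<min 1 (sqrt \<mu>)}"
    then have h: "0 < h" "h \<le> 1" "h < sqrt \<mu>" by auto
    have "h^2 < (sqrt \<mu>)^2" using h by (intro power_strict_mono) auto
    then have h2: "h^2 \<le> \<mu>" using mu by simp
    have a: "\<bar>\<Sum>j=1..W. TA h j\<bar> \<le> (\<Sum>j=1..W. KA j) * h^2"
    proof -
      have "\<bar>\<Sum>j=1..W. TA h j\<bar> \<le> (\<Sum>j=1..W. \<bar>TA h j\<bar>)" by (rule sum_abs)
      also have "\<dots> \<le> (\<Sum>j=1..W. KA j * h^2)" using KA h h2 by (intro sum_mono) blast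
      finally show ?thesis by (simp add: sum_distrib_right)
    qed
    have b: "\<bar>\<Sum>j=1..W. TS h j\<bar> \<le> (\<Sum>j=1..W. KS j) * h^2"
    proof -
      have "\<bar>\<Sum>j=1..W. TS h j\<bar> \<le> (\<Sum>j=1..W. \<bar>TS h j\<bar>)" by (rule sum_abs)
      also have "\<dots> \<le> (\<Sum>j=1..W. KS j * h^2)" using KS h h2 by (intro sum_mono) blast
      finally show ?thesis by (simp add: sum_distrib_right)
    qed
    have c: "\<bar>TT h\<bar> \<le> KT * h^2" using KT h h2 by blast
    have "\<bar>TT h + (\<Sum>j=1..W. TA h j) + (\<Sum>j=1..W. TS h j)\<bar> \<le> KT * h^2 + (\<Sum>j=1..W. KA j) * h^2 + (\<Sum>j=1..W. KS j) * h^2"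
      using a b c by linarith
    then show "norm (TT h + (\<Sum>j=1..W. TA h j) + (\<Sum>j=1..W. TS h j))
       \<le> (KT + (\<Sum>j=1..W. KA j) + (\<Sum>j=1..W. KS j)) * norm (h^2)"
      by (simp add: algebra_simps)
  qed
  show ?thesis
    unfolding split by (rule bigoI[OF ev])
qed

end
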